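(* For every positive integer $n$, $$\sum_{k=1}^{n} \frac{2^k}{k} = \frac{2^n}{\mathrm{lcm}(1,2,\dots,n)} \cdot N_n,$$ where $N_n := \mathrm{lcm}\left\{\binom{n-1}{0}, \binom{n-1}{1}, \dots, \binom{n-1}{n-1}\right\} \cdot \sum_{k=0}^{n-1} \binom{n-1}{k}^{-1}$ is a positive integer. *)

theory Defs
  imports Complex_Main
begin

definition N_seq :: "nat \<Rightarrow> real" where
  "N_seq n = real (Lcm ((\<lambda>k. (n - 1) choose k) ` {0..n-1}))
              * (\<Sum>k=0..n-1. 1 / real ((n - 1) choose k))"

end

theory Submission
  imports Defs
begin

definition Ssum :: "nat \<Rightarrow> real" where
  "Ssum m = (\<Sum>k=0..m. 1 / real (m choose k))"

lemma pair:
  fixes j k :: nat assumes "k \<le> j"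
  shows "1/real (Suc j choose k) + 1/real (Suc j choose Suc k)
         = real (j+2) / (real (Suc j) * real (j choose k))"
proof -
  have h1: "real (Suc j - k) * real (Suc j choose k) = real (Suc j) * real (j choose k)"
    using binomial_absorb_comp[of "Suc j" k] by (metis diff_Suc_1 of_nat_mult)
  have h2: "real (Suc k) * real (Suc j choose Suc k) = real (Suc j) * real (j choose k)"
    using Suc_times_binomial[of k j] by (metis of_nat_mult)
  have p: "real (j choose k) > 0" using assms by simp
  have p1: "real (Suc j choose k) > 0" using assms by simp
  have p2: "real (Suc j choose Suc k) > 0" by (metis Suc_le_mono assms of_nat_0_less_iff zero_less_binomial_iff)
  have e1: "1/real (Suc j choose k) = real (Suc j - k) / (real (Suc j) * real (j choose k))"
    using h1 p p1 by (simp add: field_simps del: of_nat_Suc)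
  have e2: "1/real (Suc j choose Suc k) = real (Suc k) / (real (Suc j) * real (j choose k))"
    using h2 p p2 by (simp add: field_simps del: of_nat_Suc)
  have "real (Suc j - k) + real (Suc k) = real (j+2)" using assms by (simp add: of_nat_diff)
  then show ?thesis unfolding e1 e2 by (simp add: add_divide_distrib[symmetric])
qed

lemma Srec: "Ssum (Suc j) = real (j+2) / (2 * real (Suc j)) * Ssum j + 1"
proof -
  have "(\<Sum>k=0..j. 1/real (Suc j choose k) + 1/real (Suc j choose Suc k))
        = (\<Sum>k=0..j. real (j+2) / (real (Suc j) * real (j choose k)))"
    by (rule sum.cong) (simp, metis pair atLeastAtMost_iff)
  also have "\<dots> = real (j+2) / real (Suc j) * Ssum j"
    unfolding Ssum_def by (simp add: sum_distrib_left)
  finally have A: "(\<Sum>k=0..j. 1/real (Suc j choose k)) + (\<Sum>k=0..j. 1/real (Suc j choose Suc k))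
        = real (j+2) / real (Suc j) * Ssum j" by (simp add: sum.distrib)
  have B1: "Ssum (Suc j) = (\<Sum>k=0..j. 1/real (Suc j choose k)) + 1"
    unfolding Ssum_def by (simp add: sum.atLeast0_atMost_Suc)
  have B2: "Ssum (Suc j) = 1 + (\<Sum>k=0..j. 1/real (Suc j choose Suc k))"
    unfolding Ssum_def by (subst sum.atLeast0_atMost_Suc_shift) simp
  from A B1 B2 have "2 * Ssum (Suc j) - 2 = real (j+2) / real (Suc j) * Ssum j" by linarith
  then show ?thesis by (simp add: field_simps)
qed

lemma Tformula: "(\<Sum>k=1..Suc j. 2 ^ k / real k) = 2 ^ Suc j / real (Suc j) * Ssum j"
proof (induction j)
  case 0
  then show ?case by (simp add: Ssum_def)
next
  case (Suc j)
  have "(\<Sum>k=1..Suc (Suc j). 2 ^ k / real k) = (\<Sum>k=1..Suc j. 2 ^ k / real k) + 2 ^ Suc (Suc j) / real (Suc (Suc j))"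
    by simp
  also have "\<dots> = 2 ^ Suc j / real (Suc j) * Ssum j + 2 ^ Suc (Suc j) / real (Suc (Suc j))"
    using Suc by simp
  also have "\<dots> = 2 ^ Suc (Suc j) / real (Suc (Suc j)) * Ssum (Suc j)"
    unfolding Srec by (simp add: field_simps del: of_nat_Suc)
  finally show ?case .
qed

definition aa :: "nat \<Rightarrow> nat \<Rightarrow> real" where
  "aa r k = 1 / real (Suc r * (r choose k))"

lemma aa_alt: "aa r k = 1 / real (r choose k) / real (Suc r)"
  unfolding aa_def by (simp add: algebra_simps)

lemma leib: "k \<le> r \<Longrightarrow> aa r k = aa (Suc r) k + aa (Suc r) (Suc k)"
proof -
  assume k: "k \<le> r"
  have p: "real (r choose k) > 0" using k by simp
  have p1: "real (Suc r choose k) > 0" using k by simp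
  have p2: "real (Suc r choose Suc k) > 0" by (metis Suc_le_mono k of_nat_0_less_iff zero_less_binomial_iff)
  have "aa (Suc r) k + aa (Suc r) (Suc k) = (1/real (Suc r choose k) + 1/real (Suc r choose Suc k)) / real (Suc (Suc r))"
    by (simp only: aa_alt add_divide_distrib)
  also have "\<dots> = real (r+2) / (real (Suc r) * real (r choose k)) / real (Suc (Suc r))"
    using pair[OF k] by simp
  also have "\<dots> = aa r k" unfolding aa_alt using p by (simp add: field_simps del: of_nat_Suc)
  finally show ?thesis by simp
qed

lemma int_to_dvd:
  fixes m D :: nat
  assumes "0 < m" "real D * (1 / real m) \<in> \<int>"
  shows "m dvd D"
proof -
  obtain z where z: "real D * (1 / real m) = of_int z" using assms(2) Ints_cases by metis
  then have "real D = real m * of_int z" using assms(1) by (simp add: field_simps)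
  then have "int D = int m * z" by (metis of_int_eq_iff of_int_mult of_int_of_nat_eq)
  then have "int m dvd int D" by simp
  then show ?thesis by simp
qed

lemma dvd_to_int:
  fixes m D :: nat
  assumes "0 < m" "m dvd D"
  shows "real D * (1 / real m) \<in> \<int>"
proof -
  obtain q where "D = m * q" using assms(2) by blast
  then have "real D * (1 / real m) = real q" using assms(1) by simp
  then show ?thesis by (simp add: Ints_of_nat)
qed

lemma lcm_id:
  "Suc j * Lcm ((\<lambda>k. j choose k) ` {0..j}) = Lcm {1..Suc j}"
proof -
  define M where "M = Lcm ((\<lambda>k. j choose k) ` {0..j})"
  define L where "L = Lcm {1..Suc j :: nat}"
  define D where "D = Suc j * M"
  have B0: "\<And>r k. r + d = j \<Longrightarrow> k \<le> r \<Longrightarrow> real D * aa r k \<in> \<int>" for d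
  proof (induction d)
    case 0
    then have "(j choose k) dvd M" unfolding M_def by (intro dvd_Lcm) auto
    then have dv: "Suc j * (j choose k) dvd D" unfolding D_def by (rule mult_dvd_mono[OF dvd_refl])
    have pos: "0 < Suc j * (j choose k)" using 0 by simp
    have rj: "r = j" using 0(1) by simp
    show ?case unfolding aa_def rj by (rule dvd_to_int[OF pos dv])
  next
    case (Suc d)
    have "real D * aa r k = real D * aa (Suc r) k + real D * aa (Suc r) (Suc k)"
      using leib[OF Suc.prems(2)] by (simp add: distrib_left)
    moreover have "real D * aa (Suc r) k \<in> \<int>" using Suc.IH[of "Suc r" k] Suc.prems by simp
    moreover have "real D * aa (Suc r) (Suc k) \<in> \<int>" using Suc.IH[of "Suc r" "Suc k"] Suc.prems by simp
    ultimately show ?case by simp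
  qed
  have "L dvd D" unfolding L_def
  proof (rule Lcm_least)
    fix b assume b: "b \<in> {1..Suc j}"
    then obtain r where r: "b = Suc r" "r \<le> j" by (cases b) auto
    have "real D * aa r 0 \<in> \<int>" using B0[of r "j - r" 0] r by simp
    then show "b dvd D" using int_to_dvd[of b D] r unfolding aa_def by simp
  qed
  have A0: "\<And>r. k \<le> r \<Longrightarrow> r \<le> j \<Longrightarrow> real L * aa r k \<in> \<int>" for k
  proof (induction k)
    case 0
    have "Suc r dvd L" unfolding L_def using 0 by (intro dvd_Lcm) auto
    then show ?case using dvd_to_int[of "Suc r" L] unfolding aa_def by simp
  next
    case (Suc k)
    then obtain r' where r': "r = Suc r'" by (cases r) auto
    have "aa r (Suc k) = aa r' k - aa r k" using leib[of k r'] Suc.prems r' by simp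
    then have "real L * aa r (Suc k) = real L * aa r' k - real L * aa r k"
      by (simp add: right_diff_distrib)
    moreover have "real L * aa r' k \<in> \<int>" using Suc.IH[of r'] Suc.prems r' by simp
    moreover have "real L * aa r k \<in> \<int>" using Suc.IH[of r] Suc.prems r' by simp
    ultimately show ?case by simp
  qed
  have A: "k \<le> j \<Longrightarrow> Suc j * (j choose k) dvd L" for k
    using A0[of k j] int_to_dvd[of "Suc j * (j choose k)" L] unfolding aa_def by simp
  obtain q where q: "L = Suc j * q" using A[of 0] by auto
  have "M dvd q" unfolding M_def
  proof (rule Lcm_least)
    fix b assume "b \<in> (\<lambda>k. j choose k) ` {0..j}"
    then obtain k where k: "k \<le> j" "b = j choose k" by auto
    have "Suc j * b dvd Suc j * q" using A[OF k(1)] k q by simp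
    then show "b dvd q" using nat_mult_dvd_cancel1[of "Suc j" b q] by blast
  qed
  then have "D dvd L" unfolding D_def q by (rule mult_dvd_mono[OF dvd_refl])
  with \<open>L dvd D\<close> have "D = L" by (simp add: dvd_antisym)
  then show ?thesis unfolding D_def L_def M_def .
qed

theorem mainTheorem8:
  fixes n :: nat
  assumes "n \<ge> 1"
  shows "(\<Sum>k=1..n. 2 ^ k / real k) = 2 ^ n / real (Lcm {1..n}) * N_seq n
         \<and> N_seq n \<in> \<nat> \<and> N_seq n > 0"
proof -
  obtain j where n: "n = Suc j" using assms by (cases n) auto
  define M where "M = Lcm ((\<lambda>k. j choose k) ` {0..j})"
  have N: "N_seq (Suc j) = real M * Ssum j" unfolding N_seq_def Ssum_def M_def n by simp
  have Mpos: "M > 0" unfolding M_def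
    by (subst neq0_conv[symmetric], subst Lcm_0_iff_nat) auto
  have L: "Lcm {1..Suc j} = Suc j * M" unfolding n M_def using lcm_id by simp
  have Spos: "Ssum j > 0" unfolding Ssum_def
    by (rule sum_pos) auto
  have eq: "(\<Sum>k=1..n. 2 ^ k / real k) = 2 ^ n / real (Lcm {1..n}) * N_seq n"
    unfolding n N L Tformula of_nat_mult using Mpos by (simp add: field_simps del: of_nat_Suc)
  have "real M * Ssum j = (\<Sum>k=0..j. real M * (1 / real (j choose k)))"
    unfolding Ssum_def by (simp add: sum_distrib_left)
  also have "\<dots> = (\<Sum>k=0..j. real (M div (j choose k)))"
  proof (rule sum.cong)
    fix k assume k: "k \<in> {0..j}"
    have "(j choose k) dvd M" unfolding M_def using k by (intro dvd_Lcm) auto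
    then obtain q where q: "M = (j choose k) * q" by blast
    have "(j choose k) > 0" using k by simp
    then show "real M * (1 / real (j choose k)) = real (M div (j choose k))"
      using q by simp
  qed simp
  finally have "N_seq n \<in> \<nat>" unfolding n N by (metis of_nat_in_Nats of_nat_sum)
  moreover have "N_seq n > 0" unfolding n N using Mpos Spos by simp
  ultimately show ?thesis using eq by simp
qed

end
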